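(* For all integers $q>r\geq 1$, there exists $\alpha\in[0,1]$ such that $f_{q,r}(N)=N^{\alpha+o(1)}$ as $N\to\infty$, i.e. $\log f_{q,r}(N)/\log N\to\alpha$.
   Context: For a $q$-edge-colored complete graph $K$ on vertex set $[N]$ with its natural order, $f_{q,r}(K)$ is the maximum number of vertices of a monotone path (vertices strictly increasing in traversal order) in $K$ whose edges use at most $r$ colors; $f_{q,r}(N)$ is the minimum of $f_{q,r}(K)$ over all such $q$-edge-colored $K$ on $N$ vertices. *)

theory Defs
  imports Complex_Main
begin

text \<open>A q-edge-coloring of the complete graph on [N] = {1..N}: the edge {i,j} with
  i < j gets colour c i j \<in> {0..<q}. (Values of c outside such pairs are irrelevant.)\<close>
definition is_coloring :: "nat \<Rightarrow> nat \<Rightarrow> (nat \<Rightarrow> nat \<Rightarrow> nat) \<Rightarrow> bool" where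
  "is_coloring q N c \<longleftrightarrow> (\<forall>i j. 1 \<le> i \<and> i < j \<and> j \<le> N \<longrightarrow> c i j < q)"

definition monotone_path :: "nat \<Rightarrow> nat list \<Rightarrow> bool" where
  "monotone_path N xs \<longleftrightarrow> sorted_wrt (<) xs \<and> set xs \<subseteq> {1..N}"

definition path_colors :: "(nat \<Rightarrow> nat \<Rightarrow> nat) \<Rightarrow> nat list \<Rightarrow> nat set" where
  "path_colors c xs = {c (xs ! k) (xs ! Suc k) | k. Suc k < length xs}"

definition f_col :: "nat \<Rightarrow> nat \<Rightarrow> (nat \<Rightarrow> nat \<Rightarrow> nat) \<Rightarrow> nat" where
  "f_col r N c = Max {length xs | xs. monotone_path N xs \<and> card (path_colors c xs) \<le> r}"

definition f_qr :: "nat \<Rightarrow> nat \<Rightarrow> nat \<Rightarrow> nat" where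
  "f_qr q r N = Min {f_col r N c | c. is_coloring q N c}"

end

theory Submission
  imports Defs
begin


lemma pc_nil[simp]: "path_colors c [] = {}" by (simp add: path_colors_def)
lemma pc_single[simp]: "path_colors c [x] = {}" by (simp add: path_colors_def)
lemma pc_cons2[simp]: "path_colors c (x # y # zs) = insert (c x y) (path_colors c (y # zs))"
proof -
  have "path_colors c (x # y # zs) = {c ((x # y # zs) ! k) ((x # y # zs) ! Suc k) | k. Suc k < length (x # y # zs)}"
    by (simp add: path_colors_def)
  also have "\<dots> = insert (c x y) {c ((y # zs) ! k) ((y # zs) ! Suc k) | k. Suc k < length (y # zs)}"
  proof (rule set_eqI, rule iffI)
    fix w assume "w \<in> {c ((x # y # zs) ! k) ((x # y # zs) ! Suc k) | k. Suc k < length (x # y # zs)}"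
    then obtain k where k: "w = c ((x # y # zs) ! k) ((x # y # zs) ! Suc k)" "Suc k < length (x # y # zs)" by blast
    show "w \<in> insert (c x y) {c ((y # zs) ! k) ((y # zs) ! Suc k) | k. Suc k < length (y # zs)}"
    proof (cases k)
      case 0 then show ?thesis using k by simp
    next
      case (Suc j) then show ?thesis using k by auto
    qed
  next
    fix w assume "w \<in> insert (c x y) {c ((y # zs) ! k) ((y # zs) ! Suc k) | k. Suc k < length (y # zs)}"
    then show "w \<in> {c ((x # y # zs) ! k) ((x # y # zs) ! Suc k) | k. Suc k < length (x # y # zs)}"
    proof
      assume "w = c x y" then show ?thesis by (intro CollectI exI[of _ 0]) auto
    next
      assume "w \<in> {c ((y # zs) ! k) ((y # zs) ! Suc k) | k. Suc k < length (y # zs)}"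
      then obtain k where k: "w = c ((y # zs) ! k) ((y # zs) ! Suc k)" "Suc k < length (y # zs)" by blast
      then show ?thesis by (intro CollectI exI[of _ "Suc k"]) auto
    qed
  qed
  also have "\<dots> = insert (c x y) (path_colors c (y # zs))" by (simp add: path_colors_def)
  finally show ?thesis .
qed

lemma pc_finite[simp]: "finite (path_colors c xs)"
proof -
  have "path_colors c xs = (\<lambda>k. c (xs ! k) (xs ! Suc k)) ` {k. Suc k < length xs}"
    by (auto simp: path_colors_def)
  moreover have "finite {k. Suc k < length xs}" by (rule finite_subset[of _ "{..<length xs}"]) auto
  ultimately show ?thesis by simp
qed

lemma pc_cons_sub: "path_colors c xs \<subseteq> path_colors c (x # xs)"
  by (cases xs) auto

lemma pc_prefix: "path_colors c xs \<subseteq> path_colors c (xs @ ys)"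
proof (induction xs)
  case Nil then show ?case by simp
next
  case (Cons x xs) then show ?case by (cases xs) auto
qed

lemma pc_suffix: "path_colors c ys \<subseteq> path_colors c (xs @ ys)"
proof (induction xs)
  case Nil then show ?case by simp
next
  case (Cons x xs) then show ?case using pc_cons_sub[of c "xs @ ys" x] by auto
qed

lemma pc_infix: "xs = pre @ mid @ post \<Longrightarrow> path_colors c mid \<subseteq> path_colors c xs"
  using pc_prefix[of c mid post] pc_suffix[of c "mid @ post" pre] by auto

lemma pc_map: assumes "\<And>u v. u \<in> set xs \<Longrightarrow> v \<in> set xs \<Longrightarrow> d (g u) (g v) = c u v"
  shows "path_colors d (map g xs) = path_colors c xs"
  using assms by (induction xs rule: induct_list012) auto

lemma filter_infix:
  assumes "sorted (map g xs)"
  shows "\<exists>pre post. xs = pre @ filter (\<lambda>v. g v = k) xs @ post"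
  using assms
proof (induction xs)
  case Nil then show ?case by simp
next
  case (Cons x xs)
  have s: "sorted (map g xs)" and ge: "\<forall>y\<in>set xs. g x \<le> g y" using Cons.prems by auto
  show ?case
  proof (cases "g x = k")
    case True
    have "filter (\<lambda>v. g v = k) xs = takeWhile (\<lambda>v. g v = k) xs"
      using s ge True
    proof (induction xs)
      case Nil then show ?case by simp
    next
      case (Cons y ys)
      show ?case
      proof (cases "g y = k")
        case True then show ?thesis using Cons by auto
      next
        case False
        then have "g y > k" using Cons.prems by auto
        then have "\<forall>z\<in>set ys. g z > k" using Cons.prems(1) by auto
        then have "filter (\<lambda>v. g v = k) ys = []" by (auto simp: filter_empty_conv)
        then show ?thesis using False by simp
      qed
    qed
    then have "x # xs = [] @ filter (\<lambda>v. g v = k) (x # xs) @ dropWhile (\<lambda>v. g v = k) xs"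
      using True by simp
    then show ?thesis by blast
  next
    case False
    show ?thesis
    proof (cases "g x < k")
      case True
      obtain pre post where "xs = pre @ filter (\<lambda>v. g v = k) xs @ post" using Cons.IH s by blast
      then have "x # xs = (x # pre) @ filter (\<lambda>v. g v = k) (x # xs) @ post" using False by simp
      then show ?thesis by blast
    next
      case F2: False
      then have "\<forall>z\<in>set (x # xs). g z \<noteq> k" using ge False by fastforce
      then have "filter (\<lambda>v. g v = k) (x # xs) = []" by (auto simp: filter_empty_conv)
      then show ?thesis by (metis append_Nil append_Nil2)
    qed
  qed
qed

lemma sorted_remdups_adj_strict: "sorted xs \<Longrightarrow> sorted_wrt (<) (remdups_adj xs)"
proof (induction xs rule: remdups_adj.induct)
  case 1 then show ?case by simp
next
  case (2 x) then show ?case by simp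
next
  case (3 x y xs)
  show ?case
  proof (cases "x = y")
    case True then show ?thesis using 3 by simp
  next
    case False
    then have "x < y" "\<forall>z\<in>set xs. x < z" using 3(3) by auto
    then show ?thesis using 3 False by (auto simp del: remdups_adj_Cons_alt)
  qed
qed

lemma pc_remdups_adj:
  assumes "\<And>u v. g u \<noteq> g v \<Longrightarrow> d (g u) (g v) = c u v"
  shows "path_colors d (remdups_adj (map g xs)) \<subseteq> path_colors c xs"
proof (induction xs)
  case Nil then show ?case by simp
next
  case (Cons x xs)
  show ?case
  proof (cases xs)
    case Nil then show ?thesis by simp
  next
    case (Cons y zs)
    show ?thesis
    proof (cases "g x = g y")
      case True
      then have "remdups_adj (map g (x # xs)) = remdups_adj (map g xs)" using Cons by simp
      then show ?thesis using Cons.IH pc_cons_sub[of c xs x] by auto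
    next
      case False
      have e: "remdups_adj (map g xs) = g y # tl (remdups_adj (map g xs))"
        using Cons remdups_adj_Cons_alt[of "g y" "map g zs"] by simp
      have "remdups_adj (map g (x # xs)) = g x # remdups_adj (map g xs)" using Cons False by simp
      also have "\<dots> = g x # g y # tl (remdups_adj (map g xs))" using e by simp
      finally have "path_colors d (remdups_adj (map g (x # xs)))
          = insert (d (g x) (g y)) (path_colors d (remdups_adj (map g xs)))" using e by (metis pc_cons2)
      then show ?thesis using Cons.IH assms[OF False] Cons by auto
    qed
  qed
qed




lemma mp_length: "monotone_path N xs \<Longrightarrow> length xs \<le> N"
proof -
  assume m: "monotone_path N xs"
  then have "distinct xs" "set xs \<subseteq> {1..N}" by (auto simp: monotone_path_def strict_sorted_iff)
  then have "length xs = card (set xs)" "card (set xs) \<le> card {1..N}"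
    by (simp add: distinct_card, intro card_mono, auto)
  then show ?thesis by simp
qed

definition valid_lens where
  "valid_lens r N c = {length xs | xs. monotone_path N xs \<and> card (path_colors c xs) \<le> r}"

lemma valid_lens_fin: "finite (valid_lens r N c)"
  by (rule finite_subset[of _ "{..N}"]) (auto simp: valid_lens_def mp_length)

lemma valid_lens_ne: "valid_lens r N c \<noteq> {}"
proof -
  have "length [] \<in> valid_lens r N c" unfolding valid_lens_def
    by (intro CollectI exI[of _ "[]"]) (simp add: monotone_path_def)
  then show ?thesis by blast
qed

lemma f_col_le: "monotone_path N xs \<Longrightarrow> card (path_colors c xs) \<le> r \<Longrightarrow> length xs \<le> f_col r N c"
  unfolding f_col_def using valid_lens_fin[of r N c] by (intro Max_ge) (auto simp: valid_lens_def)

lemma f_col_bound: "(\<And>xs. monotone_path N xs \<Longrightarrow> card (path_colors c xs) \<le> r \<Longrightarrow> length xs \<le> M)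
   \<Longrightarrow> f_col r N c \<le> M"
  unfolding f_col_def using valid_lens_fin[of r N c] valid_lens_ne[of r N c]
  by (subst Max_le_iff) (auto simp: valid_lens_def)

lemma f_col_le_N: "f_col r N c \<le> N"
  by (rule f_col_bound) (rule mp_length)

lemma f_col_ge1: "1 \<le> N \<Longrightarrow> 1 \<le> f_col r N c"
  using f_col_le[of N "[1]" c r] by (simp add: monotone_path_def)

lemma f_qr_set_fin: "finite {f_col r N c | c. is_coloring q N c}"
  by (rule finite_subset[of _ "{..N}"]) (auto simp: f_col_le_N)

lemma f_qr_set_ne: "1 \<le> q \<Longrightarrow> {f_col r N c | c. is_coloring q N c} \<noteq> {}"
proof -
  assume "1 \<le> q"
  then have "is_coloring q N (\<lambda>_ _. 0)" by (simp add: is_coloring_def)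
  then show ?thesis by blast
qed

lemma f_qr_obtain: "1 \<le> q \<Longrightarrow> \<exists>c. is_coloring q N c \<and> f_qr q r N = f_col r N c"
proof -
  assume "1 \<le> q"
  then have "f_qr q r N \<in> {f_col r N c | c. is_coloring q N c}"
    unfolding f_qr_def using f_qr_set_fin f_qr_set_ne by (intro Min_in) auto
  then show ?thesis by blast
qed

lemma f_qr_le: "is_coloring q N c \<Longrightarrow> f_qr q r N \<le> f_col r N c"
  unfolding f_qr_def using f_qr_set_fin by (intro Min_le) auto

lemma f_qr_ge1: "1 \<le> q \<Longrightarrow> 1 \<le> N \<Longrightarrow> 1 \<le> f_qr q r N"
  using f_qr_obtain[of q N r] f_col_ge1 by metis

lemma f_qr_le_N: "1 \<le> q \<Longrightarrow> f_qr q r N \<le> N"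
  using f_qr_obtain[of q N r] f_col_le_N by metis

lemma f_qr_mono_Suc: "1 \<le> q \<Longrightarrow> f_qr q r N \<le> f_qr q r (Suc N)"
proof -
  assume q: "1 \<le> q"
  obtain c where c: "is_coloring q (Suc N) c" "f_qr q r (Suc N) = f_col r (Suc N) c"
    using f_qr_obtain[OF q] by blast
  have "is_coloring q N c" using c(1) by (auto simp: is_coloring_def)
  then have "f_qr q r N \<le> f_col r N c" by (rule f_qr_le)
  also have "f_col r N c \<le> f_col r (Suc N) c"
    by (rule f_col_bound, rule f_col_le) (auto simp: monotone_path_def)
  finally show ?thesis using c by simp
qed

lemma f_qr_mono: assumes "1 \<le> q" "M \<le> N" shows "f_qr q r M \<le> f_qr q r N"
  using assms(2) by (induction N rule: dec_induct) (auto intro: order_trans f_qr_mono_Suc[OF assms(1)])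




definition Bk :: "nat \<Rightarrow> nat \<Rightarrow> nat" where "Bk b u = (u - 1) div b + 1"
definition Ps :: "nat \<Rightarrow> nat \<Rightarrow> nat" where "Ps b u = (u - 1) mod b + 1"
definition cprod where
  "cprod b c1 c2 u v = (if Bk b u = Bk b v then c2 (Ps b u) (Ps b v) else c1 (Bk b u) (Bk b v))"

lemma Bk_mono: "u \<le> v \<Longrightarrow> Bk b u \<le> Bk b v"
  unfolding Bk_def by (simp add: div_le_mono)

lemma Ps_less: assumes "1 \<le> u" "u < v" "Bk b u = Bk b v" shows "Ps b u < Ps b v"
proof -
  have d: "(u - 1) div b = (v - 1) div b" using assms(3) by (simp add: Bk_def)
  have "u - 1 = b * ((u - 1) div b) + (u - 1) mod b" by simp
  moreover have "v - 1 = b * ((u - 1) div b) + (v - 1) mod b" using d by simp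
  moreover have "u - 1 < v - 1" using assms by simp
  ultimately have "(u - 1) mod b < (v - 1) mod b" using d by linarith
  then show ?thesis by (simp add: Ps_def)
qed

lemma Bk_range: assumes "1 \<le> u" "u \<le> a * b" shows "1 \<le> Bk b u" "Bk b u \<le> a"
proof -
  show "1 \<le> Bk b u" by (simp add: Bk_def)
  have "u - 1 < a * b" using assms by simp
  then have "(u - 1) div b < a" by (simp add: div_less_iff_less_mult mult.commute less_mult_imp_div_less)
  then show "Bk b u \<le> a" by (simp add: Bk_def)
qed

lemma Ps_range: assumes "1 \<le> b" shows "1 \<le> Ps b u" "Ps b u \<le> b"
  using assms by (auto simp: Ps_def Suc_le_eq)

lemma cprod_coloring:
  assumes "1 \<le> b" "is_coloring q a c1" "is_coloring q b c2"
  shows "is_coloring q (a * b) (cprod b c1 c2)"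
  unfolding is_coloring_def
proof (intro allI impI)
  fix i j assume h: "1 \<le> i \<and> i < j \<and> j \<le> a * b"
  show "cprod b c1 c2 i j < q"
  proof (cases "Bk b i = Bk b j")
    case True
    then have "Ps b i < Ps b j" using Ps_less h by auto
    then show ?thesis using True assms Ps_range[OF assms(1)] unfolding cprod_def is_coloring_def by auto
  next
    case False
    then have "Bk b i < Bk b j" using Bk_mono[of i j b] h by auto
    moreover have "1 \<le> Bk b i" by (simp add: Bk_def)
    moreover have "Bk b j \<le> a" using Bk_range(2)[of j a b] h by auto
    ultimately show ?thesis using False assms unfolding cprod_def is_coloring_def by auto
  qed
qed

lemma cprod_bound:
  assumes b1: "1 \<le> b" and mp: "monotone_path (a * b) xs"
    and cr: "card (path_colors (cprod b c1 c2) xs) \<le> r"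
  shows "length xs \<le> f_col r a c1 * f_col r b c2"
proof -
  let ?c = "cprod b c1 c2"
  let ?g = "Bk b"
  have sxs: "sorted_wrt (<) xs" and rng: "set xs \<subseteq> {1..a*b}" using mp by (auto simp: monotone_path_def)
  have smap: "sorted (map ?g xs)" unfolding sorted_map
    by (rule sorted_wrt_mono_rel[OF _ sxs]) (auto intro: Bk_mono)
  define ys where "ys = remdups_adj (map ?g xs)"
  have "sorted_wrt (<) ys" unfolding ys_def by (rule sorted_remdups_adj_strict[OF smap])
  moreover have sety: "set ys = ?g ` set xs" by (simp add: ys_def)
  moreover have "?g ` set xs \<subseteq> {1..a}"
  proof
    fix k assume "k \<in> ?g ` set xs"
    then obtain u where u: "u \<in> set xs" "k = ?g u" by blast
    then have "1 \<le> u" "u \<le> a * b" using rng by auto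
    then show "k \<in> {1..a}" using Bk_range[of u a b] u by auto
  qed
  ultimately have mpy: "monotone_path a ys" by (simp add: monotone_path_def)
  have "path_colors c1 ys \<subseteq> path_colors ?c xs" unfolding ys_def
    by (rule pc_remdups_adj) (simp add: cprod_def)
  then have "card (path_colors c1 ys) \<le> r" using cr by (meson card_mono order_trans pc_finite)
  then have ly: "length ys \<le> f_col r a c1" using f_col_le mpy by blast
  have cardg: "card (?g ` set xs) \<le> f_col r a c1"
    using sety card_length[of ys] ly by simp
  have fk: "length (filter (\<lambda>v. ?g v = k) xs) \<le> f_col r b c2" for k
  proof -
    define mid where "mid = filter (\<lambda>v. ?g v = k) xs"
    have smid: "sorted_wrt (<) mid" unfolding mid_def by (rule sorted_wrt_filter[OF sxs])
    have setm: "set mid \<subseteq> set xs" "\<forall>v\<in>set mid. ?g v = k" by (auto simp: mid_def)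
    have "sorted_wrt (<) (map (Ps b) mid)" unfolding sorted_wrt_map
    proof (rule sorted_wrt_mono_rel[OF _ smid])
      fix x y assume "x \<in> set mid" "y \<in> set mid" "x < y"
      moreover have "1 \<le> x" using rng setm \<open>x \<in> set mid\<close> by auto
      moreover have "?g x = ?g y" using setm \<open>x \<in> set mid\<close> \<open>y \<in> set mid\<close> by auto
      ultimately show "Ps b x < Ps b y" using Ps_less by blast
    qed
    moreover have "set (map (Ps b) mid) \<subseteq> {1..b}" using Ps_range[OF b1] by auto
    ultimately have mpm: "monotone_path b (map (Ps b) mid)" by (simp add: monotone_path_def)
    have "path_colors c2 (map (Ps b) mid) = path_colors ?c mid"
      by (rule pc_map) (use setm in \<open>auto simp: cprod_def\<close>)
    also have "\<dots> \<subseteq> path_colors ?c xs"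
      using filter_infix[OF smap, of k] pc_infix unfolding mid_def by metis
    finally have "card (path_colors c2 (map (Ps b) mid)) \<le> r" using cr by (meson card_mono order_trans pc_finite)
    then have "length (map (Ps b) mid) \<le> f_col r b c2" using f_col_le mpm by blast
    then show ?thesis by (simp add: mid_def)
  qed
  have "length xs = card (set xs)" using sxs by (simp add: strict_sorted_iff distinct_card)
  also have "set xs = (\<Union>k\<in>?g ` set xs. set (filter (\<lambda>v. ?g v = k) xs))" by auto
  also have "card \<dots> \<le> (\<Sum>k\<in>?g ` set xs. card (set (filter (\<lambda>v. ?g v = k) xs)))"
    by (rule card_UN_le) simp
  also have "\<dots> \<le> (\<Sum>k\<in>?g ` set xs. f_col r b c2)"
    by (rule sum_mono) (rule order_trans[OF card_length fk])
  also have "\<dots> = card (?g ` set xs) * f_col r b c2" by simp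
  also have "\<dots> \<le> f_col r a c1 * f_col r b c2" using cardg by simp
  finally show ?thesis .
qed

lemma f_qr_submult:
  assumes q: "1 \<le> q" and b: "1 \<le> b"
  shows "f_qr q r (a * b) \<le> f_qr q r a * f_qr q r b"
proof -
  obtain c1 where c1: "is_coloring q a c1" "f_qr q r a = f_col r a c1" using f_qr_obtain[OF q] by blast
  obtain c2 where c2: "is_coloring q b c2" "f_qr q r b = f_col r b c2" using f_qr_obtain[OF q] by blast
  have "f_qr q r (a * b) \<le> f_col r (a * b) (cprod b c1 c2)"
    by (rule f_qr_le, rule cprod_coloring) (use b c1 c2 in auto)
  also have "\<dots> \<le> f_col r a c1 * f_col r b c2"
    by (rule f_col_bound, rule cprod_bound[OF b])
  finally show ?thesis using c1 c2 by simp
qed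

lemma f_qr_pow: assumes "1 \<le> q" "1 \<le> m" shows "f_qr q r (m ^ k) \<le> f_qr q r m ^ k"
proof (induction k)
  case 0 then show ?case using f_qr_le_N[OF assms(1), of r 1] by simp
next
  case (Suc k)
  have "f_qr q r (m ^ Suc k) = f_qr q r (m * m ^ k)" by simp
  also have "\<dots> \<le> f_qr q r m * f_qr q r (m ^ k)"
    by (rule f_qr_submult) (use assms in auto)
  also have "\<dots> \<le> f_qr q r m * f_qr q r m ^ k" using Suc by simp
  finally show ?case by simp
qed




theorem proposition3p5:
  fixes q r :: nat
  assumes "1 \<le> r" and "r < q"
  shows "\<exists>\<alpha>::real. 0 \<le> \<alpha> \<and> \<alpha> \<le> 1 \<and>
           ((\<lambda>N. ln (real (f_qr q r N)) / ln (real N)) \<longlongrightarrow> \<alpha>) sequentially"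
proof -
  have q: "1 \<le> q" using assms by simp
  define g where "g N = ln (real (f_qr q r N)) / ln (real N)" for N
  have g0: "0 \<le> g N" if "2 \<le> N" for N
  proof -
    have "1 \<le> f_qr q r N" using f_qr_ge1[OF q] that by simp
    then have "0 \<le> ln (real (f_qr q r N))" by simp
    moreover have "0 < ln (real N)" using that by simp
    ultimately show ?thesis by (simp add: g_def)
  qed
  have g1: "g N \<le> 1" if "2 \<le> N" for N
  proof -
    have "1 \<le> f_qr q r N" using f_qr_ge1[OF q] that by simp
    moreover have "f_qr q r N \<le> N" using f_qr_le_N[OF q] by simp
    ultimately have "ln (real (f_qr q r N)) \<le> ln (real N)" by simp
    moreover have "0 < ln (real N)" using that by simp
    ultimately show ?thesis by (simp add: g_def)
  qed
  define S where "S = {g m | m. 2 \<le> m}"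
  define \<alpha> where "\<alpha> = Inf S"
  have Sne: "S \<noteq> {}" unfolding S_def by blast
  have Sbdd: "bdd_below S" unfolding S_def bdd_below_def using g0 by blast
  have low: "\<alpha> \<le> g N" if "2 \<le> N" for N
    unfolding \<alpha>_def by (rule cInf_lower[OF _ Sbdd]) (use that S_def in blast)
  have a0: "0 \<le> \<alpha>" unfolding \<alpha>_def by (rule cInf_greatest[OF Sne]) (auto simp: S_def g0)
  have a1: "\<alpha> \<le> 1" using low[of 2] g1[of 2] by simp
  have lim: "g \<longlonglongrightarrow> \<alpha>"
  proof (rule LIMSEQ_I)
    fix e :: real assume e: "0 < e"
    obtain m where m: "2 \<le> m" "g m < \<alpha> + e / 2"
      using cInf_lessD[OF Sne, of "\<alpha> + e / 2"] e unfolding \<alpha>_def S_def by auto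
    obtain K0 where K0: "inverse (real (Suc K0)) < e / 2" using reals_Archimedean e by (metis half_gt_zero)
    define K where "K = Suc K0"
    have "\<forall>N\<ge>m ^ K. norm (g N - \<alpha>) < e"
    proof (intro allI impI)
      fix N assume N: "m ^ K \<le> N"
      have "m \<le> m ^ K" using m by (simp add: K_def)
      then have N2: "2 \<le> N" using m N by linarith
      obtain k where k: "m ^ k \<le> N" "N < m ^ (k + 1)" using ex_power_ivl1[OF m(1), of N] N2 by auto
      have kK: "K \<le> k"
      proof (rule ccontr)
        assume "\<not> K \<le> k"
        then have "m ^ (k + 1) \<le> m ^ K" using m by (intro power_increasing) auto
        then show False using k N by linarith
      qed
      then have k1: "1 \<le> k" by (simp add: K_def)
      have "f_qr q r N \<le> f_qr q r (m ^ (k + 1))" using k by (intro f_qr_mono[OF q]) simp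
      also have "\<dots> \<le> f_qr q r m ^ (k + 1)" using m by (intro f_qr_pow[OF q]) simp
      finally have fN: "real (f_qr q r N) \<le> real (f_qr q r m) ^ (k + 1)" by (metis of_nat_le_iff of_nat_power)
      have fN1: "1 \<le> f_qr q r N" using f_qr_ge1[OF q] N2 by simp
      have fm1: "1 \<le> f_qr q r m" using f_qr_ge1[OF q] m by simp
      have lnF: "ln (real (f_qr q r N)) \<le> real (k + 1) * ln (real (f_qr q r m))"
      proof -
        have "ln (real (f_qr q r N)) \<le> ln (real (f_qr q r m) ^ (k + 1))"
          using fN fN1 by simp
        also have "\<dots> = real (k + 1) * ln (real (f_qr q r m))" by (rule ln_realpow)
        finally show ?thesis .
      qed
      have lnm: "0 < ln (real m)" using m by simp
      have lnN: "real k * ln (real m) \<le> ln (real N)"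
      proof -
        have "real k * ln (real m) = ln (real m ^ k)" by (rule ln_realpow[symmetric])
        also have "\<dots> \<le> ln (real N)" using k m by (metis of_nat_le_iff of_nat_power ln_le_cancel_iff
              of_nat_0_less_iff zero_less_power order_less_le_trans le_less_trans zero_less_numeral)
        finally show ?thesis .
      qed
      have Lm0: "0 \<le> ln (real (f_qr q r m))" using fm1 by simp
      have "g N \<le> real (k + 1) * ln (real (f_qr q r m)) / (real k * ln (real m))"
        unfolding g_def
      proof (rule frac_le)
        show "0 \<le> real (k + 1) * ln (real (f_qr q r m))" using Lm0 by simp
        show "0 < real k * ln (real m)" using k1 lnm by simp
      qed (use lnF lnN in auto)
      also have "\<dots> = g m + g m / real k" unfolding g_def using k1 lnm by (simp add: field_simps)
      also have "\<dots> \<le> g m + 1 / real k" using g1[OF m(1)] k1 by (simp add: divide_right_mono)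
      also have "1 / real k \<le> 1 / real K" using kK by (simp add: K_def frac_le)
      also have "1 / real K < e / 2" using K0 by (simp add: K_def inverse_eq_divide)
      finally have up: "g N < \<alpha> + e" using m by linarith
      show "norm (g N - \<alpha>) < e" using up low[OF N2] by simp
    qed
    then show "\<exists>no. \<forall>N\<ge>no. norm (g N - \<alpha>) < e" by blast
  qed
  show ?thesis using a0 a1 lim unfolding g_def by blast
qed


end
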